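(* Let $S$ be a finite poset whose Hasse graph $\Gamma(S)$ is the path $A_n$. Suppose $S$ contains a subposet $W$ isomorphic to $W^{k,k+1}$ ($k\ge1$) with $s_1^+,s_{k+1}^+\notin S^\times$, or a subposet $W$ isomorphic to $W^{k+1,k}$ with $s_1^-,s_{k+1}^-\notin S^\times$. Then $C(f_S)\ne\varnothing$.
   Context: $f_S(x)=\sum_i x_i^2+\sum_{s_i<s_j}x_ix_j$. $H_n=\{x:\sum x_i=0\}$; $C(f)$ is the set of $h\in H_n\setminus\{0\}$ with either all $\partial f/\partial x_i(h)\le0$ or all $\ge0$. $\Gamma(S)$: vertices $S$, edge between $s,s'$ when one covers the other. $W^{k,k+1}=\{s_1^-,\dots,s_k^-,s_1^+,\dots,s_{k+1}^+\}$ with only strict relations $s_i^-<s_i^+$, $s_i^-<s_{i+1}^+$ ($1\le i\le k$); $W^{k+1,k}=\{s_1^-,\dots,s_{k+1}^-,s_1^+,\dots,s_k^+\}$ with only strict relations $s_i^+>s_i^-$, $s_i^+>s_{i+1}^-$ ($1\le i\le k$). $S^\times$ is the set of junction points of $S$: elements covering at least two elements of $S$ or covered by at least two elements of $S$. *)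

theory Defs
  imports "HOL-Analysis.Analysis"
begin

text \<open>A finite poset is modelled as a finite subset S of a type with a partial order;
  vectors indexed by S are functions 'a \<Rightarrow> real vanishing outside S.\<close>

definition fS :: "'a::order set \<Rightarrow> ('a \<Rightarrow> real) \<Rightarrow> real" where
  "fS S x = (\<Sum>s\<in>S. (x s)^2) + (\<Sum>(s,t)\<in>{(s,t). s \<in> S \<and> t \<in> S \<and> s < t}. x s * x t)"

definition partial_fS :: "'a::order set \<Rightarrow> 'a \<Rightarrow> ('a \<Rightarrow> real) \<Rightarrow> real" where
  "partial_fS S s x = deriv (\<lambda>t. fS S (x(s := t))) (x s)"

definition Cset :: "'a::order set \<Rightarrow> ('a \<Rightarrow> real) set" where
  "Cset S = {h. (\<forall>s. s \<notin> S \<longrightarrow> h s = 0) \<and> (\<Sum>s\<in>S. h s) = 0 \<and> (\<exists>s\<in>S. h s \<noteq> 0) \<and>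
      ((\<forall>s\<in>S. partial_fS S s h \<le> 0) \<or> (\<forall>s\<in>S. partial_fS S s h \<ge> 0))}"

definition covers :: "'a::order set \<Rightarrow> 'a \<Rightarrow> 'a \<Rightarrow> bool" where
  "covers S a b \<longleftrightarrow> a \<in> S \<and> b \<in> S \<and> b < a \<and> \<not> (\<exists>u\<in>S. b < u \<and> u < a)"

definition hasse_edge :: "'a::order set \<Rightarrow> 'a \<Rightarrow> 'a \<Rightarrow> bool" where
  "hasse_edge S a b \<longleftrightarrow> covers S a b \<or> covers S b a"

definition hasse_is_path :: "'a::order set \<Rightarrow> nat \<Rightarrow> bool" where
  "hasse_is_path S n \<longleftrightarrow> (\<exists>p. bij_betw p {0..<n} S \<and>
      (\<forall>i<n. \<forall>j<n. hasse_edge S (p i) (p j) \<longleftrightarrow> (i = j + 1 \<or> j = i + 1)))"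

definition junction :: "'a::order set \<Rightarrow> 'a \<Rightarrow> bool" where
  "junction S s \<longleftrightarrow> s \<in> S \<and> (card {t\<in>S. covers S s t} \<ge> 2 \<or> card {t\<in>S. covers S t s} \<ge> 2)"

text \<open>Embedding of W as an induced subposet of S: minus elements m 1..m a,
  plus elements p 1..p b, all distinct, and the only strict relations among them
  are m i < p j for (i,j) with rel i j.\<close>
definition induced_bipartite ::
  "'a::order set \<Rightarrow> nat \<Rightarrow> nat \<Rightarrow> (nat \<Rightarrow> nat \<Rightarrow> bool) \<Rightarrow> (nat \<Rightarrow> 'a) \<Rightarrow> (nat \<Rightarrow> 'a) \<Rightarrow> bool" where
  "induced_bipartite S a b rel m p \<longleftrightarrow>
     m ` {1..a} \<subseteq> S \<and> p ` {1..b} \<subseteq> S \<and>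
     inj_on m {1..a} \<and> inj_on p {1..b} \<and> m ` {1..a} \<inter> p ` {1..b} = {} \<and>
     (\<forall>i\<in>{1..a}. \<forall>j\<in>{1..a}. \<not> m i < m j) \<and>
     (\<forall>i\<in>{1..b}. \<forall>j\<in>{1..b}. \<not> p i < p j) \<and>
     (\<forall>i\<in>{1..a}. \<forall>j\<in>{1..b}. \<not> p j < m i \<and> (m i < p j \<longleftrightarrow> rel i j))"

definition is_W_k_k1 :: "'a::order set \<Rightarrow> nat \<Rightarrow> (nat \<Rightarrow> 'a) \<Rightarrow> (nat \<Rightarrow> 'a) \<Rightarrow> bool" where
  "is_W_k_k1 S k m p \<longleftrightarrow> induced_bipartite S k (k+1) (\<lambda>i j. j = i \<or> j = i + 1) m p"

text \<open>W^{k+1,k}: s_i^+ > s_i^-, s_i^+ > s_{i+1}^- (1 \<le> i \<le> k).\<close>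
definition is_W_k1_k :: "'a::order set \<Rightarrow> nat \<Rightarrow> (nat \<Rightarrow> 'a) \<Rightarrow> (nat \<Rightarrow> 'a) \<Rightarrow> bool" where
  "is_W_k1_k S k m p \<longleftrightarrow> induced_bipartite S (k+1) k (\<lambda>j i. j = i \<or> j = i + 1) m p"

end

theory Submission
  imports Defs
begin



definition runc :: "(nat \<Rightarrow> bool) \<Rightarrow> nat \<Rightarrow> nat \<Rightarrow> bool" where
  "runc u i j \<longleftrightarrow> (\<forall>l. i \<le> l \<and> l < j \<longrightarrow> u l) \<or> (\<forall>l. i \<le> l \<and> l < j \<longrightarrow> \<not> u l)"

definition cmpi :: "(nat \<Rightarrow> bool) \<Rightarrow> nat \<Rightarrow> nat \<Rightarrow> bool" where
  "cmpi u i j \<longleftrightarrow> i \<noteq> j \<and> runc u (min i j) (max i j)"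

definition sg :: "(nat \<Rightarrow> bool) \<Rightarrow> nat \<Rightarrow> nat \<Rightarrow> nat \<Rightarrow> real" where
  "sg u a b j = (if a \<le> j \<and> j < b then (if u j then 1 else -1) else 0)"

definition pre :: "(nat \<Rightarrow> bool) \<Rightarrow> nat \<Rightarrow> nat \<Rightarrow> nat \<Rightarrow> real" where
  "pre u a b j = (if 0 < j then sg u a b (j - 1) else 0)"

definition hh :: "(nat \<Rightarrow> bool) \<Rightarrow> nat \<Rightarrow> nat \<Rightarrow> nat \<Rightarrow> real" where
  "hh u a b j = pre u a b j - sg u a b j"

lemma pre_Suc: "pre u a b (Suc j) = sg u a b j" by (simp add: pre_def)

lemma tele: "i \<le> j \<Longrightarrow> (\<Sum>x\<in>{i..<j}. hh u a b x) = pre u a b i - pre u a b j"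
proof (induction j rule: dec_induct)
  case base then show ?case by simp
next
  case (step j) then show ?case by (simp add: hh_def pre_Suc)
qed

lemma runc_mono: "runc u i j \<Longrightarrow> i \<le> i' \<Longrightarrow> j' \<le> j \<Longrightarrow> runc u i' j'"
  unfolding runc_def by force

lemma runc_triv: "j \<le> Suc i \<Longrightarrow> runc u i j"
proof -
  assume "j \<le> Suc i"
  then have "\<And>l. i \<le> l \<Longrightarrow> l < j \<Longrightarrow> l = i" by linarith
  then show ?thesis unfolding runc_def by (cases "u i") auto
qed

lemma runc_eq: "runc u i j \<Longrightarrow> i \<le> x \<Longrightarrow> x < j \<Longrightarrow> i \<le> y \<Longrightarrow> y < j \<Longrightarrow> u x = u y"
  unfolding runc_def by blast

lemma runc_extL: assumes "runc u i j" "0 < i" "i < j" "u (i - 1) = u i" shows "runc u (i - 1) j"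
proof -
  have "\<And>l. i - 1 \<le> l \<Longrightarrow> l < j \<Longrightarrow> u l = u i"
  proof -
    fix l assume "i - 1 \<le> l" "l < j"
    then consider "l = i - 1" | "i \<le> l" by linarith
    then show "u l = u i" using assms runc_eq[OF assms(1), of l i] \<open>l < j\<close> by cases auto
  qed
  then show ?thesis unfolding runc_def by (cases "u i") auto
qed

lemma runc_extR: assumes "runc u i j" "i < j" "u j = u (j - 1)" shows "runc u i (Suc j)"
proof -
  have "\<And>l. i \<le> l \<Longrightarrow> l < Suc j \<Longrightarrow> u l = u (j - 1)"
  proof -
    fix l assume "i \<le> l" "l < Suc j"
    then consider "l = j" | "l < j" by linarith
    then show "u l = u (j - 1)" using assms runc_eq[OF assms(1), of l "j - 1"] \<open>i \<le> l\<close> by cases auto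
  qed
  then show ?thesis unfolding runc_def by (cases "u (j - 1)") auto
qed

lemma leftpart:
  assumes f1: "\<And>x. L \<le> x \<Longrightarrow> x < l \<Longrightarrow> u x = u (l - 1)"
    and f3: "0 < L \<Longrightarrow> L < l \<and> u (L - 1) \<noteq> u (l - 1)"
    and ab: "a < b" "b < n" and ua: "\<not> u a" and ub: "b + 1 < n \<longrightarrow> u b"
    and l: "l < n" "L \<le> l" and ub1: "u (b - 1)"
  shows "pre u a b l + pre u a b L \<le> 0"
proof (cases "u (l - 1)")
  case True
  show ?thesis
  proof (cases "0 < l \<and> a \<le> l - 1 \<and> l - 1 < b")
    case False
    then have "pre u a b l = 0" using True by (auto simp: pre_def sg_def)
    moreover have "pre u a b L \<le> 0" using f3 True by (auto simp: pre_def sg_def)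
    ultimately show ?thesis by simp
  next
    case c: True
    have "a < l" using c by auto
    then have "\<not> L \<le> a" using f1[of a] c ua True by auto
    then have "0 < L" "a \<le> L - 1" "L - 1 < b" using f3 c by auto
    then have "pre u a b L = -1" using f3 True by (auto simp: pre_def sg_def)
    moreover have "pre u a b l = 1" using c True by (auto simp: pre_def sg_def)
    ultimately show ?thesis by simp
  qed
next
  case False
  show ?thesis
  proof (cases "0 < L \<and> a \<le> L - 1 \<and> L - 1 < b")
    case c: True
    have Ll: "L < l" using f3 c by auto
    have "l - 1 < b"
    proof (rule ccontr)
      assume "\<not> l - 1 < b"
      show False
      proof (cases "L \<le> b - 1")
        case True
        moreover have "b - 1 < l" using \<open>\<not> l - 1 < b\<close> ab by arith
        ultimately show False using f1[of "b - 1"] False ub1 by auto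
      next
        case F2: False
        then have "L = b" using c by auto
        then show False using f1[of b] \<open>\<not> l - 1 < b\<close> False ub Ll l by auto
      qed
    qed
    then have "pre u a b l = -1" using c Ll False by (auto simp: pre_def sg_def)
    moreover have "pre u a b L = 1" using f3 c False by (auto simp: pre_def sg_def)
    ultimately show ?thesis by simp
  next
    case c: False
    have "pre u a b L = 0" using c by (auto simp: pre_def sg_def)
    moreover have "pre u a b l \<le> 0" using False by (auto simp: pre_def sg_def)
    ultimately show ?thesis by simp
  qed
qed

lemma rightpart:
  assumes f2: "\<And>x. l \<le> x \<Longrightarrow> x < R \<Longrightarrow> u x = u l"
    and f4: "R < n - 1 \<Longrightarrow> l < R \<and> u R \<noteq> u l"
    and ab: "a < b" "b < n" and ua: "\<not> u a" "0 < a \<longrightarrow> \<not> u (a - 1)" and ub: "u (b - 1)"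
    and l: "l \<le> R" "R \<le> n - 1"
  shows "sg u a b l + sg u a b R \<ge> 0"
proof (cases "u l")
  case True
  show ?thesis
  proof (cases "a \<le> R \<and> R < b \<and> \<not> u R")
    case nc: False
    have "sg u a b R \<ge> 0"
    proof (cases "R < n - 1")
      case True then show ?thesis using f4 \<open>u l\<close> nc by (auto simp: sg_def)
    next
      case False then show ?thesis using ab l by (auto simp: sg_def)
    qed
    moreover have "sg u a b l \<ge> 0" using True by (auto simp: sg_def)
    ultimately show ?thesis by simp
  next
    case c: True
    have Rn: "R < n - 1" using c ab by auto
    have lR: "l < R" using f4 Rn by auto
    have "a \<le> l"
    proof (rule ccontr)
      assume "\<not> a \<le> l"
      show False
      proof (cases "a < R")
        case True then show False using f2[of a] \<open>\<not> a \<le> l\<close> ua \<open>u l\<close> by auto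
      next
        case False
        then have "a = R" using c by auto
        then show False using f2[of "a - 1"] \<open>\<not> a \<le> l\<close> ua \<open>u l\<close> lR by auto
      qed
    qed
    then have "sg u a b l = 1" using True lR c by (auto simp: sg_def)
    moreover have "sg u a b R = -1" using c by (auto simp: sg_def)
    ultimately show ?thesis by simp
  qed
next
  case False
  show ?thesis
  proof (cases "a \<le> l \<and> l < b")
    case c: True
    have "R < b"
    proof (rule ccontr)
      assume "\<not> R < b"
      then have "l \<le> b - 1" "b - 1 < R" using c by arith+
      then show False using f2[of "b - 1"] ub False by auto
    qed
    then have "R < n - 1" using ab by auto
    then have "u R" using f4 False by auto
    then have "sg u a b R = 1" using \<open>R < b\<close> c l by (auto simp: sg_def)
    moreover have "sg u a b l = -1" using c False by (auto simp: sg_def)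
    ultimately show ?thesis by simp
  next
    case c: False
    have "sg u a b R \<ge> 0"
    proof (cases "R < n - 1")
      case True then show ?thesis using f4 \<open>\<not> u l\<close> by (auto simp: sg_def)
    next
      case False then show ?thesis using ab l by (auto simp: sg_def)
    qed
    moreover have "sg u a b l = 0" using c by (auto simp: sg_def)
    ultimately show ?thesis by simp
  qed
qed

lemma comb_main:
  assumes ab: "a < b" "b < n" and ua: "\<not> u a" "0 < a \<longrightarrow> \<not> u (a - 1)"
    and ub: "u (b - 1)" "b + 1 < n \<longrightarrow> u b" and l: "l < n"
  shows "2 * hh u a b l + (\<Sum>j\<in>{j. j < n \<and> cmpi u l j}. hh u a b j) \<le> 0"
proof -
  define L where "L = (LEAST j. runc u j l)"
  have rL: "runc u L l" unfolding L_def by (rule LeastI[of _ l]) (simp add: runc_triv)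
  have Lmin: "\<And>j. j < L \<Longrightarrow> \<not> runc u j l" unfolding L_def using not_less_Least by blast
  have Ll: "L \<le> l" unfolding L_def by (rule Least_le) (simp add: runc_triv)
  define R where "R = (GREATEST j. j \<le> n - 1 \<and> runc u l j)"
  have RP: "R \<le> n - 1 \<and> runc u l R" unfolding R_def
    by (rule GreatestI_nat[of _ l "n - 1"]) (use l in \<open>auto simp: runc_triv\<close>)
  have Rmax: "\<And>j. j \<le> n - 1 \<Longrightarrow> runc u l j \<Longrightarrow> j \<le> R" unfolding R_def
    by (rule Greatest_le_nat[of _ _ "n - 1"]) auto
  have lR: "l \<le> R" using Rmax[of l] l by (simp add: runc_triv)
  have set: "{j. j < n \<and> cmpi u l j} = {L..<l} \<union> {Suc l..<Suc R}"
  proof (rule set_eqI, rule iffI)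
    fix j assume "j \<in> {j. j < n \<and> cmpi u l j}"
    then have j: "j < n" "j \<noteq> l" "runc u (min l j) (max l j)" by (auto simp: cmpi_def)
    show "j \<in> {L..<l} \<union> {Suc l..<Suc R}"
    proof (cases "j < l")
      case True then show ?thesis using j Lmin[of j] by (auto simp: min_def max_def not_less[symmetric])
    next
      case False then show ?thesis using j Rmax[of j] by (auto simp: min_def max_def less_Suc_eq_le)
    qed
  next
    fix j assume "j \<in> {L..<l} \<union> {Suc l..<Suc R}"
    then show "j \<in> {j. j < n \<and> cmpi u l j}"
      using rL RP l runc_mono[of u L l j l] runc_mono[of u l R l j]
      by (auto simp: cmpi_def min_def max_def)
  qed
  have sum: "(\<Sum>j\<in>{j. j < n \<and> cmpi u l j}. hh u a b j) = (pre u a b L - pre u a b l) + (pre u a b (Suc l) - pre u a b (Suc R))"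
  proof -
    have t1: "(\<Sum>j\<in>{L..<l}. hh u a b j) = pre u a b L - pre u a b l" by (rule tele[OF Ll])
    have t2: "(\<Sum>j\<in>{Suc l..<Suc R}. hh u a b j) = pre u a b (Suc l) - pre u a b (Suc R)"
      by (rule tele) (use lR in simp)
    have d: "(\<Sum>j\<in>{L..<l} \<union> {Suc l..<Suc R}. hh u a b j) = (\<Sum>j\<in>{L..<l}. hh u a b j) + (\<Sum>j\<in>{Suc l..<Suc R}. hh u a b j)"
      by (rule sum.union_disjoint) auto
    show ?thesis unfolding set d t1 t2 by (rule refl)
  qed
  have g: "2 * hh u a b l + (\<Sum>j\<in>{j. j < n \<and> cmpi u l j}. hh u a b j)
     = pre u a b l - sg u a b l + pre u a b L - sg u a b R"
    unfolding sum by (simp add: hh_def pre_Suc)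
  have f1: "\<And>x. L \<le> x \<Longrightarrow> x < l \<Longrightarrow> u x = u (l - 1)"
  proof -
    fix x assume "L \<le> x" "x < l"
    then show "u x = u (l - 1)" using runc_eq[OF rL, of x "l - 1"] by simp
  qed
  have f2: "\<And>x. l \<le> x \<Longrightarrow> x < R \<Longrightarrow> u x = u l"
  proof -
    fix x assume "l \<le> x" "x < R"
    then show "u x = u l" using runc_eq[OF RP[THEN conjunct2], of x l] by simp
  qed
  have f3: "0 < L \<Longrightarrow> L < l \<and> u (L - 1) \<noteq> u (l - 1)"
  proof -
    assume L0: "0 < L"
    have "\<not> runc u (L - 1) l" using Lmin L0 by simp
    then have "L \<noteq> l" using runc_triv[of l "L - 1" u] L0 by auto
    moreover have "u (L - 1) \<noteq> u (l - 1)"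
    proof
      assume e: "u (L - 1) = u (l - 1)"
      have "u L = u (l - 1)" using f1[of L] \<open>L \<noteq> l\<close> Ll by simp
      then have "runc u (L - 1) l" using runc_extL[OF rL L0] \<open>L \<noteq> l\<close> Ll e by simp
      then show False using \<open>\<not> runc u (L - 1) l\<close> by simp
    qed
    ultimately show ?thesis using Ll by simp
  qed
  have f4: "R < n - 1 \<Longrightarrow> l < R \<and> u R \<noteq> u l"
  proof -
    assume R1: "R < n - 1"
    have "\<not> runc u l (Suc R)" using Rmax[of "Suc R"] R1 by auto
    then have "l \<noteq> R" using runc_triv[of "Suc R" l u] by auto
    moreover have "u R \<noteq> u l"
    proof
      assume e: "u R = u l"
      have "u (R - 1) = u l" using f2[of "R - 1"] \<open>l \<noteq> R\<close> lR by simp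
      then have "runc u l (Suc R)" using runc_extR[of u l R] RP \<open>l \<noteq> R\<close> lR e by simp
      then show False using \<open>\<not> runc u l (Suc R)\<close> by simp
    qed
    ultimately show ?thesis using lR by simp
  qed
  have "pre u a b l + pre u a b L \<le> 0"
    by (rule leftpart[OF f1 f3 ab(1,2) ua(1) ub(2) l Ll ub(1)])
  moreover have "sg u a b l + sg u a b R \<ge> 0"
    by (rule rightpart[OF f2 f4 ab(1,2) ua ub(1) lR RP[THEN conjunct1]])
  ultimately show ?thesis unfolding g by simp
qed




lemma pair_sum1:
  fixes S :: "'a::order set"
  assumes "finite S" "s \<in> S"
  shows "(\<Sum>z\<in>{(a,b). a \<in> S \<and> b \<in> S \<and> a < b}. if fst z = s then x (snd z) else (0::real))
       = (\<Sum>b\<in>{b\<in>S. s < b}. x b)"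
proof -
  let ?P = "{(a,b). a \<in> S \<and> b \<in> S \<and> a < b}"
  have fin: "finite ?P" by (rule finite_subset[of _ "S \<times> S"]) (use assms in auto)
  have "(\<Sum>z\<in>?P. if fst z = s then x (snd z) else 0) = (\<Sum>z\<in>{z\<in>?P. fst z = s}. x (snd z))"
    by (rule sum.inter_filter[symmetric]) (rule fin)
  also have "{z\<in>?P. fst z = s} = (\<lambda>b. (s, b)) ` {b\<in>S. s < b}" using assms by auto
  also have "(\<Sum>z\<in>(\<lambda>b. (s, b)) ` {b\<in>S. s < b}. x (snd z)) = (\<Sum>b\<in>{b\<in>S. s < b}. x b)"
    by (subst sum.reindex) (auto simp: inj_on_def)
  finally show ?thesis .
qed

lemma pair_sum2:
  fixes S :: "'a::order set"
  assumes "finite S" "s \<in> S"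
  shows "(\<Sum>z\<in>{(a,b). a \<in> S \<and> b \<in> S \<and> a < b}. if snd z = s then x (fst z) else (0::real))
       = (\<Sum>b\<in>{b\<in>S. b < s}. x b)"
proof -
  let ?P = "{(a,b). a \<in> S \<and> b \<in> S \<and> a < b}"
  have fin: "finite ?P" by (rule finite_subset[of _ "S \<times> S"]) (use assms in auto)
  have "(\<Sum>z\<in>?P. if snd z = s then x (fst z) else 0) = (\<Sum>z\<in>{z\<in>?P. snd z = s}. x (fst z))"
    by (rule sum.inter_filter[symmetric]) (rule fin)
  also have "{z\<in>?P. snd z = s} = (\<lambda>b. (b, s)) ` {b\<in>S. b < s}" using assms by auto
  also have "(\<Sum>z\<in>(\<lambda>b. (b, s)) ` {b\<in>S. b < s}. x (fst z)) = (\<Sum>b\<in>{b\<in>S. b < s}. x b)"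
    by (subst sum.reindex) (auto simp: inj_on_def)
  finally show ?thesis .
qed

lemma fS_upd:
  fixes S :: "'a::order set"
  assumes "finite S" "s \<in> S"
  shows "fS S (x(s := t)) = fS S x + (t^2 - (x s)^2) + (t - x s) *
     ((\<Sum>b\<in>{b\<in>S. s < b}. x b) + (\<Sum>b\<in>{b\<in>S. b < s}. x b))"
proof -
  let ?P = "{(a,b). a \<in> S \<and> b \<in> S \<and> a < b}"
  have sq: "(\<Sum>r\<in>S. ((x(s := t)) r)^2) = (\<Sum>r\<in>S. (x r)^2) + (t^2 - (x s)^2)"
  proof -
    have "(\<Sum>r\<in>S. ((x(s := t)) r)^2) = (\<Sum>r\<in>S. (x r)^2 + (if r = s then t^2 - (x s)^2 else 0))"
      by (rule sum.cong) auto
    also have "\<dots> = (\<Sum>r\<in>S. (x r)^2) + (t^2 - (x s)^2)"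
      using assms by (simp add: sum.distrib)
    finally show ?thesis .
  qed
  have pr: "(\<Sum>(a,b)\<in>?P. (x(s := t)) a * (x(s := t)) b) =
      (\<Sum>(a,b)\<in>?P. x a * x b) + (t - x s) *
      ((\<Sum>z\<in>?P. if fst z = s then x (snd z) else 0) + (\<Sum>z\<in>?P. if snd z = s then x (fst z) else 0))"
  proof -
    have "(\<Sum>(a,b)\<in>?P. (x(s := t)) a * (x(s := t)) b) =
       (\<Sum>z\<in>?P. x (fst z) * x (snd z) + ((t - x s) * (if fst z = s then x (snd z) else 0)
          + (t - x s) * (if snd z = s then x (fst z) else 0)))"
      by (rule sum.cong) (auto simp: algebra_simps)
    also have "\<dots> = (\<Sum>(a,b)\<in>?P. x a * x b) + (t - x s) *
      ((\<Sum>z\<in>?P. if fst z = s then x (snd z) else 0) + (\<Sum>z\<in>?P. if snd z = s then x (fst z) else 0))"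
      by (simp add: sum.distrib sum_distrib_left distrib_left case_prod_beta)
    finally show ?thesis .
  qed
  show ?thesis unfolding fS_def sq pr pair_sum1[OF assms] pair_sum2[OF assms] by simp
qed

lemma partial_formula:
  fixes S :: "'a::order set"
  assumes "finite S" "s \<in> S"
  shows "partial_fS S s x = 2 * x s + ((\<Sum>b\<in>{b\<in>S. s < b}. x b) + (\<Sum>b\<in>{b\<in>S. b < s}. x b))"
proof -
  define c where "c = (\<Sum>b\<in>{b\<in>S. s < b}. x b) + (\<Sum>b\<in>{b\<in>S. b < s}. x b)"
  have eq: "(\<lambda>t. fS S (x(s := t))) = (\<lambda>t. fS S x + (t^2 - (x s)^2) + (t - x s) * c)"
    using fS_upd[OF assms] unfolding c_def by auto
  have "((\<lambda>t. fS S x + (t^2 - (x s)^2) + (t - x s) * c) has_real_derivative (2 * x s + c)) (at (x s))"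
    by (auto intro!: derivative_eq_intros)
  then have "deriv (\<lambda>t. fS S (x(s := t))) (x s) = 2 * x s + c"
    unfolding eq by (rule DERIV_imp_deriv)
  then show ?thesis unfolding partial_fS_def c_def .
qed




definition Mono :: "(nat \<Rightarrow> bool) \<Rightarrow> nat \<Rightarrow> nat \<Rightarrow> bool" where
  "Mono u i j \<longleftrightarrow> (i < j \<and> (\<forall>l. i \<le> l \<and> l < j \<longrightarrow> u l)) \<or> (j < i \<and> (\<forall>l. j \<le> l \<and> l < i \<longrightarrow> \<not> u l))"

lemma mono_trans:
  assumes "Mono u i t" "Mono u t j" shows "Mono u i j"
proof -
  have A: "(i < t \<and> (\<forall>l. i \<le> l \<and> l < t \<longrightarrow> u l)) \<or> (t < i \<and> (\<forall>l. t \<le> l \<and> l < i \<longrightarrow> \<not> u l))"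
    using assms(1) unfolding Mono_def .
  have B: "(t < j \<and> (\<forall>l. t \<le> l \<and> l < j \<longrightarrow> u l)) \<or> (j < t \<and> (\<forall>l. j \<le> l \<and> l < t \<longrightarrow> \<not> u l))"
    using assms(2) unfolding Mono_def .
  show ?thesis
  proof (cases "i < t")
    case it: True
    then have a: "\<forall>l. i \<le> l \<and> l < t \<longrightarrow> u l" using A by auto
    show ?thesis
    proof (cases "t < j")
      case True
      then have c: "\<forall>l. t \<le> l \<and> l < j \<longrightarrow> u l" using B by auto
      have "\<forall>l. i \<le> l \<and> l < j \<longrightarrow> u l"
      proof (intro allI impI)
        fix l assume "i \<le> l \<and> l < j" then show "u l" using a c by (cases "l < t") auto
      qed
      then show ?thesis using it True unfolding Mono_def by auto
    next
      case False
      then have d: "j < t" "\<forall>l. j \<le> l \<and> l < t \<longrightarrow> \<not> u l" using B by auto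
      have "u (max i j)" using a it d(1) by auto
      moreover have "\<not> u (max i j)" using d it by auto
      ultimately show ?thesis by simp
    qed
  next
    case ti: False
    then have b: "t < i" "\<forall>l. t \<le> l \<and> l < i \<longrightarrow> \<not> u l" using A by auto
    show ?thesis
    proof (cases "t < j")
      case True
      then have c: "\<forall>l. t \<le> l \<and> l < j \<longrightarrow> u l" using B by auto
      have "u t" using c True by auto
      moreover have "\<not> u t" using b by auto
      ultimately show ?thesis by simp
    next
      case False
      then have d: "j < t" "\<forall>l. j \<le> l \<and> l < t \<longrightarrow> \<not> u l" using B by auto
      have "\<forall>l. j \<le> l \<and> l < i \<longrightarrow> \<not> u l"
      proof (intro allI impI)
        fix l assume "j \<le> l \<and> l < i" then show "\<not> u l" using b d by (cases "l < t") auto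
      qed
      then show ?thesis using b d unfolding Mono_def by auto
    qed
  qed
qed

lemma cmpi_Mono: "cmpi u i j \<longleftrightarrow> Mono u i j \<or> Mono u j i"
  unfolding cmpi_def runc_def Mono_def by (cases i j rule: linorder_cases) (auto simp: min_def max_def)

lemma cmpi_neg: "cmpi (\<lambda>l. \<not> u l) i j = cmpi u i j"
  unfolding cmpi_def runc_def by auto

lemma between:
  assumes "cmpi u i j" "cmpi u j l" "\<not> cmpi u i l" "i \<noteq> l"
  shows "(i < j \<and> j < l) \<or> (l < j \<and> j < i)"
proof (rule ccontr)
  assume nb: "\<not> ?thesis"
  have ij: "i \<noteq> j" "j \<noteq> l" using assms unfolding cmpi_def by auto
  have r1: "runc u (min i j) (max i j)" and r2: "runc u (min j l) (max j l)" using assms unfolding cmpi_def by auto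
  have "runc u (min i l) (max i l)"
  proof (cases "j < i")
    case True
    then have "j < l" using nb ij by auto
    show ?thesis
    proof (cases "i < l")
      case True then show ?thesis using runc_mono[OF r2, of i l] \<open>j < i\<close> by (auto simp: min_def max_def)
    next
      case False then show ?thesis using runc_mono[OF r1, of l i] \<open>j < l\<close> by (auto simp: min_def max_def)
    qed
  next
    case False
    then have "i < j" "l < j" using nb ij by auto
    show ?thesis
    proof (cases "i < l")
      case True then show ?thesis using runc_mono[OF r1, of i l] \<open>l < j\<close> by (auto simp: min_def max_def)
    next
      case False then show ?thesis using runc_mono[OF r2, of l i] \<open>i < j\<close> by (auto simp: min_def max_def)
    qed
  qed
  then show False using assms(3,4) unfolding cmpi_def by auto
qed

lemma chain_inc:
  fixes w :: "nat \<Rightarrow> nat"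
  assumes btw: "\<And>t. t + 2 \<le> K \<Longrightarrow> (w t < w (t+1) \<and> w (t+1) < w (t+2)) \<or> (w (t+2) < w (t+1) \<and> w (t+1) < w t)"
    and s: "w 0 < w 1"
  shows "t < K \<Longrightarrow> w t < w (Suc t)"
proof (induction t)
  case 0 then show ?case using s by simp
next
  case (Suc t)
  then show ?case using btw[of t] by auto
qed

lemma chain_dec:
  fixes w :: "nat \<Rightarrow> nat"
  assumes btw: "\<And>t. t + 2 \<le> K \<Longrightarrow> (w t < w (t+1) \<and> w (t+1) < w (t+2)) \<or> (w (t+2) < w (t+1) \<and> w (t+1) < w t)"
    and s: "w 1 < w 0"
  shows "t < K \<Longrightarrow> w (Suc t) < w t"
proof (induction t)
  case 0 then show ?case using s by simp
next
  case (Suc t)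
  then show ?case using btw[of t] by auto
qed

lemma chain_all_inc: "(\<And>t. t < K \<Longrightarrow> (w t :: nat) < w (Suc t)) \<Longrightarrow> 0 < K \<Longrightarrow> w 0 < w K"
proof (induction K)
  case 0 then show ?case by simp
next
  case (Suc K) then show ?case by (cases K) (auto intro: less_trans)
qed

lemma chain_all_dec: "(\<And>t. t < K \<Longrightarrow> (w (Suc t) :: nat) < w t) \<Longrightarrow> 0 < K \<Longrightarrow> w K < w 0"
proof (induction K)
  case 0 then show ?case by simp
next
  case (Suc K) then show ?case by (cases K) (auto intro: less_trans)
qed




locale pp =
  fixes S :: "'a::order set" and n :: nat and q :: "nat \<Rightarrow> 'a"
  assumes fin: "finite S" and bij: "bij_betw q {0..<n} S"
    and edge: "\<And>i j. i < n \<Longrightarrow> j < n \<Longrightarrow> hasse_edge S (q i) (q j) \<longleftrightarrow> (i = j + 1 \<or> j = i + 1)"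
begin

definition U :: "nat \<Rightarrow> bool" where "U l \<longleftrightarrow> q l < q (Suc l)"

lemma qS: "i < n \<Longrightarrow> q i \<in> S" using bij by (auto simp: bij_betw_def)
lemma qinj: "i < n \<Longrightarrow> j < n \<Longrightarrow> q i = q j \<Longrightarrow> i = j"
  using bij by (auto simp: bij_betw_def inj_on_def)
lemma qsurj: "x \<in> S \<Longrightarrow> \<exists>i<n. q i = x"
  using bij unfolding bij_betw_def by (metis atLeastLessThan_iff imageE)

lemma stp: "Suc l < n \<Longrightarrow> q l < q (Suc l) \<or> q (Suc l) < q l"
  using edge[of l "Suc l"] by (auto simp: hasse_edge_def covers_def)
lemma cov_up: "Suc l < n \<Longrightarrow> q l < q (Suc l) \<Longrightarrow> covers S (q (Suc l)) (q l)"
  using edge[of l "Suc l"] by (auto simp: hasse_edge_def covers_def)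
lemma cov_dn: "Suc l < n \<Longrightarrow> q (Suc l) < q l \<Longrightarrow> covers S (q l) (q (Suc l))"
  using edge[of l "Suc l"] by (auto simp: hasse_edge_def covers_def)
lemma notU: "Suc l < n \<Longrightarrow> \<not> U l \<Longrightarrow> q (Suc l) < q l" using stp by (auto simp: U_def)

lemma up_chain: "(\<forall>l. i \<le> l \<and> l < i + d + 1 \<longrightarrow> U l) \<Longrightarrow> i + d + 1 < n \<Longrightarrow> q i < q (i + d + 1)"
proof (induction d)
  case 0 then show ?case by (auto simp: U_def)
next
  case (Suc d)
  then have "q i < q (i + d + 1)" by auto
  moreover have "U (i + d + 1)" using Suc.prems by auto
  ultimately show ?case by (auto simp: U_def)
qed

lemma dn_chain: "(\<forall>l. i \<le> l \<and> l < i + d + 1 \<longrightarrow> \<not> U l) \<Longrightarrow> i + d + 1 < n \<Longrightarrow> q (i + d + 1) < q i"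
proof (induction d)
  case 0 then show ?case using notU[of i] by auto
next
  case (Suc d)
  then have "q (i + d + 1) < q i" by auto
  moreover have "\<not> U (i + d + 1)" using Suc.prems by auto
  ultimately show ?case using notU[of "i + d + 1"] Suc.prems by (auto intro: less_trans)
qed

lemma mono_less: assumes "i < n" "j < n" "Mono U i j" shows "q i < q j"
proof -
  consider "i < j" "\<forall>l. i \<le> l \<and> l < j \<longrightarrow> U l" | "j < i" "\<forall>l. j \<le> l \<and> l < i \<longrightarrow> \<not> U l"
    using assms(3) unfolding Mono_def by blast
  then show ?thesis
  proof cases
    case 1
    then obtain d where "j = i + d + 1" by (metis add.commute less_imp_Suc_add plus_1_eq_Suc)
    then show ?thesis using up_chain[of i d] 1 assms by auto
  next
    case 2
    then obtain d where "i = j + d + 1" by (metis add.commute less_imp_Suc_add plus_1_eq_Suc)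
    then show ?thesis using dn_chain[of j d] 2 assms by auto
  qed
qed

lemma less_mono_aux:
  "\<forall>i j. i < n \<longrightarrow> j < n \<longrightarrow> q i < q j \<longrightarrow> card {z\<in>S. q i < z \<and> z < q j} = N \<longrightarrow> Mono U i j"
proof (induction N rule: less_induct)
  case (less N)
  show ?case
  proof (intro allI impI)
    fix i j assume ij: "i < n" "j < n" "q i < q j" and N: "card {z\<in>S. q i < z \<and> z < q j} = N"
    show "Mono U i j"
    proof (cases "\<exists>z\<in>S. q i < z \<and> z < q j")
      case False
      then have "covers S (q j) (q i)" using ij qS unfolding covers_def by auto
      then have "hasse_edge S (q i) (q j)" unfolding hasse_edge_def by auto
      then have "i = j + 1 \<or> j = i + 1" using edge ij by auto
      then show ?thesis
      proof
        assume "j = i + 1" then show ?thesis using ij unfolding Mono_def U_def by (auto simp: le_less_Suc_eq)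
      next
        assume e: "i = j + 1"
        then have "\<not> U j" using ij unfolding U_def by auto
        then show ?thesis using e unfolding Mono_def by (auto simp: le_less_Suc_eq)
      qed
    next
      case True
      then obtain z where z: "z \<in> S" "q i < z" "z < q j" by auto
      obtain t where t: "t < n" "q t = z" using qsurj[OF z(1)] by auto
      have f: "finite {z\<in>S. q i < z \<and> z < q j}" using fin by auto
      have c1: "card {y\<in>S. q i < y \<and> y < q t} < N"
        unfolding N[symmetric] by (rule psubset_card_mono[OF f]) (use z t in \<open>auto intro: less_trans\<close>)
      have c2: "card {y\<in>S. q t < y \<and> y < q j} < N"
        unfolding N[symmetric] by (rule psubset_card_mono[OF f]) (use z t in \<open>auto intro: less_trans\<close>)
      have "Mono U i t" using less.IH[OF c1] ij t z by auto
      moreover have "Mono U t j" using less.IH[OF c2] ij t z by auto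
      ultimately show ?thesis by (rule mono_trans)
    qed
  qed
qed

lemma less_mono: "i < n \<Longrightarrow> j < n \<Longrightarrow> q i < q j \<Longrightarrow> Mono U i j"
  using less_mono_aux by blast

lemma comp_iff: "i < n \<Longrightarrow> j < n \<Longrightarrow> (q i < q j \<or> q j < q i) \<longleftrightarrow> cmpi U i j"
  unfolding cmpi_Mono using less_mono mono_less by blast


lemma junc_lo: assumes "x \<in> S" "y1 \<noteq> y2" "covers S x y1" "covers S x y2" shows "junction S x"
proof -
  have "card {y1, y2} \<le> card {t\<in>S. covers S x t}"
    by (rule card_mono) (use fin assms in \<open>auto simp: covers_def\<close>)
  then show ?thesis using assms unfolding junction_def by auto
qed

lemma junc_hi: assumes "x \<in> S" "y1 \<noteq> y2" "covers S y1 x" "covers S y2 x" shows "junction S x"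
proof -
  have "card {y1, y2} \<le> card {t\<in>S. covers S t x}"
    by (rule card_mono) (use fin assms in \<open>auto simp: covers_def\<close>)
  then show ?thesis using assms unfolding junction_def by auto
qed

lemma endpoint_lo:
  assumes cd: "c < n" "d < n" "q d < q c" and nj: "\<not> junction S (q c)"
  shows "(c < d \<longrightarrow> \<not> U c \<and> (0 < c \<longrightarrow> \<not> U (c - 1))) \<and> (d < c \<longrightarrow> U (c - 1) \<and> (c + 1 < n \<longrightarrow> U c))"
proof -
  have M: "Mono U d c" by (rule less_mono[OF cd(2,1,3)])
  have A: "c < d \<longrightarrow> \<not> U c \<and> (0 < c \<longrightarrow> \<not> U (c - 1))"
  proof
    assume "c < d"
    then have nu: "\<not> U c" using M unfolding Mono_def by auto
    moreover have "0 < c \<longrightarrow> \<not> U (c - 1)"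
    proof
      assume c0: "0 < c"
      show "\<not> U (c - 1)"
      proof
        assume "U (c - 1)"
        then have "q (c - 1) < q (Suc (c - 1))" unfolding U_def .
        then have c1: "covers S (q c) (q (c - 1))" using cov_up[of "c - 1"] c0 cd by simp
        have "q (Suc c) < q c" using notU[of c] nu \<open>c < d\<close> cd by auto
        then have c2: "covers S (q c) (q (Suc c))" using cov_dn[of c] \<open>c < d\<close> cd by auto
        have "c - 1 < n" "Suc c < n" "c - 1 \<noteq> Suc c" using \<open>c < d\<close> cd by arith+
        then have "q (c - 1) \<noteq> q (Suc c)" using qinj[of "c - 1" "Suc c"] by auto
        then show False using junc_lo[OF qS[OF cd(1)] _ c1 c2] nj by auto
      qed
    qed
    ultimately show "\<not> U c \<and> (0 < c \<longrightarrow> \<not> U (c - 1))" by simp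
  qed
  have B: "d < c \<longrightarrow> U (c - 1) \<and> (c + 1 < n \<longrightarrow> U c)"
  proof
    assume "d < c"
    then have u1: "U (c - 1)" using M unfolding Mono_def by auto
    moreover have "c + 1 < n \<longrightarrow> U c"
    proof
      assume cn: "c + 1 < n"
      show "U c"
      proof (rule ccontr)
        assume "\<not> U c"
        then have "q (Suc c) < q c" using notU[of c] cn by auto
        then have c2: "covers S (q c) (q (Suc c))" using cov_dn[of c] cn by auto
        have "q (c - 1) < q (Suc (c - 1))" using u1 unfolding U_def .
        then have c1: "covers S (q c) (q (c - 1))" using cov_up[of "c - 1"] \<open>d < c\<close> cd by simp
        have "c - 1 < n" "Suc c < n" "c - 1 \<noteq> Suc c" using cn cd by arith+
        then have "q (c - 1) \<noteq> q (Suc c)" using qinj[of "c - 1" "Suc c"] by auto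
        then show False using junc_lo[OF qS[OF cd(1)] _ c1 c2] nj by auto
      qed
    qed
    ultimately show "U (c - 1) \<and> (c + 1 < n \<longrightarrow> U c)" by simp
  qed
  show ?thesis using A B by simp
qed

lemma endpoint_hi:
  assumes cd: "c < n" "d < n" "q c < q d" and nj: "\<not> junction S (q c)"
  shows "(c < d \<longrightarrow> U c \<and> (0 < c \<longrightarrow> U (c - 1))) \<and> (d < c \<longrightarrow> \<not> U (c - 1) \<and> (c + 1 < n \<longrightarrow> \<not> U c))"
proof -
  have M: "Mono U c d" by (rule less_mono[OF cd(1,2,3)])
  have A: "c < d \<longrightarrow> U c \<and> (0 < c \<longrightarrow> U (c - 1))"
  proof
    assume "c < d"
    then have nu: "U c" using M unfolding Mono_def by auto
    moreover have "0 < c \<longrightarrow> U (c - 1)"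
    proof
      assume c0: "0 < c"
      show "U (c - 1)"
      proof (rule ccontr)
        assume "\<not> U (c - 1)"
        then have "q (Suc (c - 1)) < q (c - 1)" using notU[of "c - 1"] c0 cd by auto
        then have c1: "covers S (q (c - 1)) (q c)" using cov_dn[of "c - 1"] c0 cd by simp
        have "q c < q (Suc c)" using nu unfolding U_def .
        then have c2: "covers S (q (Suc c)) (q c)" using cov_up[of c] \<open>c < d\<close> cd by auto
        have "c - 1 < n" "Suc c < n" "c - 1 \<noteq> Suc c" using \<open>c < d\<close> cd by arith+
        then have "q (c - 1) \<noteq> q (Suc c)" using qinj[of "c - 1" "Suc c"] by auto
        then show False using junc_hi[OF qS[OF cd(1)] _ c1 c2] nj by auto
      qed
    qed
    ultimately show "U c \<and> (0 < c \<longrightarrow> U (c - 1))" by simp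
  qed
  have B: "d < c \<longrightarrow> \<not> U (c - 1) \<and> (c + 1 < n \<longrightarrow> \<not> U c)"
  proof
    assume "d < c"
    then have u1: "\<not> U (c - 1)" using M unfolding Mono_def by auto
    moreover have "c + 1 < n \<longrightarrow> \<not> U c"
    proof
      assume cn: "c + 1 < n"
      show "\<not> U c"
      proof
        assume "U c"
        then have "q c < q (Suc c)" unfolding U_def .
        then have c2: "covers S (q (Suc c)) (q c)" using cov_up[of c] cn by auto
        have "q (Suc (c - 1)) < q (c - 1)" using notU[of "c - 1"] u1 \<open>d < c\<close> cd by auto
        then have c1: "covers S (q (c - 1)) (q c)" using cov_dn[of "c - 1"] \<open>d < c\<close> cd by simp
        have "c - 1 < n" "Suc c < n" "c - 1 \<noteq> Suc c" using cn cd by arith+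
        then have "q (c - 1) \<noteq> q (Suc c)" using qinj[of "c - 1" "Suc c"] by auto
        then show False using junc_hi[OF qS[OF cd(1)] _ c1 c2] nj by auto
      qed
    qed
    ultimately show "\<not> U (c - 1) \<and> (c + 1 < n \<longrightarrow> \<not> U c)" by simp
  qed
  show ?thesis using A B by simp
qed

definition ix :: "'a \<Rightarrow> nat" where "ix = the_inv_into {0..<n} q"

lemma ixq: "i < n \<Longrightarrow> ix (q i) = i"
  unfolding ix_def using bij by (auto simp: bij_betw_def the_inv_into_f_f)

lemma qix: "x \<in> S \<Longrightarrow> ix x < n \<and> q (ix x) = x"
  using qsurj ixq by metis

lemma cset_ne:
  assumes v: "\<And>i j. cmpi v i j = cmpi U i j"
    and ab: "a < b" "b < n" and va: "\<not> v a" "0 < a \<longrightarrow> \<not> v (a - 1)"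
    and vb: "v (b - 1)" "b + 1 < n \<longrightarrow> v b"
  shows "Cset S \<noteq> {}"
proof -
  define h where "h s = (if s \<in> S then hh v a b (ix s) else 0)" for s
  have hq: "\<And>i. i < n \<Longrightarrow> h (q i) = hh v a b i" unfolding h_def using qS ixq by auto
  have "(\<Sum>s\<in>S. h s) = (\<Sum>i\<in>{0..<n}. h (q i))"
    by (rule sum.reindex_bij_betw[OF bij, symmetric])
  also have "\<dots> = (\<Sum>i\<in>{0..<n}. hh v a b i)" by (rule sum.cong) (auto simp: hq)
  also have "\<dots> = pre v a b 0 - pre v a b n" by (rule tele) simp
  also have "\<dots> = 0" using ab by (auto simp: pre_def sg_def)
  finally have hsum: "(\<Sum>s\<in>S. h s) = 0" .
  have hne: "h (q a) \<noteq> 0" using hq[of a] ab va by (auto simp: hh_def pre_def sg_def)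
  have part: "partial_fS S s h \<le> 0" if sS: "s \<in> S" for s
  proof -
    obtain l where l: "l < n" "q l = s" using qsurj[OF sS] by auto
    have un: "{y\<in>S. s < y} \<union> {y\<in>S. y < s} = q ` {j. j < n \<and> cmpi v l j}"
    proof (rule set_eqI, rule iffI)
      fix y assume y: "y \<in> {y\<in>S. s < y} \<union> {y\<in>S. y < s}"
      then obtain j where j: "j < n" "q j = y" using qsurj by blast
      have "cmpi v l j" using comp_iff[OF l(1) j(1)] y j l v by auto
      then show "y \<in> q ` {j. j < n \<and> cmpi v l j}" using j by auto
    next
      fix y assume "y \<in> q ` {j. j < n \<and> cmpi v l j}"
      then obtain j where j: "j < n" "cmpi v l j" "y = q j" by auto
      then show "y \<in> {y\<in>S. s < y} \<union> {y\<in>S. y < s}" using comp_iff[OF l(1) j(1)] v l qS by auto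
    qed
    have "(\<Sum>y\<in>{y\<in>S. s < y}. h y) + (\<Sum>y\<in>{y\<in>S. y < s}. h y) = (\<Sum>y\<in>{y\<in>S. s < y} \<union> {y\<in>S. y < s}. h y)"
      by (rule sum.union_disjoint[symmetric]) (use fin in auto)
    also have "\<dots> = (\<Sum>j\<in>{j. j < n \<and> cmpi v l j}. h (q j))"
      unfolding un by (subst sum.reindex) (auto intro: inj_onI qinj)
    also have "\<dots> = (\<Sum>j\<in>{j. j < n \<and> cmpi v l j}. hh v a b j)" by (rule sum.cong) (auto simp: hq)
    finally have e: "(\<Sum>y\<in>{y\<in>S. s < y}. h y) + (\<Sum>y\<in>{y\<in>S. y < s}. h y) = (\<Sum>j\<in>{j. j < n \<and> cmpi v l j}. hh v a b j)" .
    have "partial_fS S s h = 2 * hh v a b l + (\<Sum>j\<in>{j. j < n \<and> cmpi v l j}. hh v a b j)"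
      unfolding partial_formula[OF fin sS] e using hq[of l] l by auto
    also have "\<dots> \<le> 0" by (rule comb_main[OF ab va vb l(1)])
    finally show ?thesis .
  qed
  have "h \<in> Cset S" unfolding Cset_def using hsum hne part qS[OF less_trans[OF ab]] by (auto simp: h_def)
  then show ?thesis by auto
qed


lemma zigzag:
  assumes eS: "\<And>t. t \<le> K \<Longrightarrow> e t \<in> S"
    and cons: "\<And>t. t < K \<Longrightarrow> e t < e (Suc t) \<or> e (Suc t) < e t"
    and tri: "\<And>t. t + 2 \<le> K \<Longrightarrow> \<not> e t < e (t + 2) \<and> \<not> e (t + 2) < e t \<and> e t \<noteq> e (t + 2)"
    and K: "0 < K"
  shows "(\<forall>t<K. ix (e t) < ix (e (Suc t))) \<or> (\<forall>t<K. ix (e (Suc t)) < ix (e t))"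
proof -
  define w where "w t = ix (e t)" for t
  have wq: "\<And>t. t \<le> K \<Longrightarrow> w t < n \<and> q (w t) = e t" unfolding w_def using qix eS by auto
  have cm: "\<And>t t'. t \<le> K \<Longrightarrow> t' \<le> K \<Longrightarrow> cmpi U (w t) (w t') \<longleftrightarrow> (e t < e t' \<or> e t' < e t)"
    using comp_iff wq by metis
  have btw: "(w t < w (t+1) \<and> w (t+1) < w (t+2)) \<or> (w (t+2) < w (t+1) \<and> w (t+1) < w t)" if t: "t + 2 \<le> K" for t
  proof -
    have "cmpi U (w t) (w (t+1))" using cm[of t "t+1"] cons[of t] t by auto
    moreover have "cmpi U (w (t+1)) (w (t+2))" using cm[of "t+1" "t+2"] cons[of "t+1"] t by auto
    moreover have "\<not> cmpi U (w t) (w (t+2))" using cm[of t "t+2"] tri[OF t] t by auto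
    moreover have "w t \<noteq> w (t+2)" using wq[of t] wq[of "t+2"] tri[OF t] t by auto
    ultimately show ?thesis by (rule between)
  qed
  have "w 0 \<noteq> w 1" using wq[of 0] wq[of 1] cons[OF K] K by auto
  then consider "w 0 < w 1" | "w 1 < w 0" by linarith
  then show ?thesis
  proof cases
    case 1
    have "w t < w (Suc t)" if "t < K" for t using chain_inc[of K w, OF btw 1 that] by simp
    then show ?thesis unfolding w_def by auto
  next
    case 2
    have "w (Suc t) < w t" if "t < K" for t using chain_dec[of K w, OF btw 2 that] by simp
    then show ?thesis unfolding w_def by auto
  qed
qed

end




lemma ib_m: assumes "induced_bipartite S a b rel m p" "1 \<le> i" "i \<le> a" shows "m i \<in> S"
proof -
  have "m ` {1..a} \<subseteq> S" using assms(1) unfolding induced_bipartite_def by blast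
  then show ?thesis using assms(2,3) by auto
qed
lemma ib_p: assumes "induced_bipartite S a b rel m p" "1 \<le> i" "i \<le> b" shows "p i \<in> S"
proof -
  have "p ` {1..b} \<subseteq> S" using assms(1) unfolding induced_bipartite_def by blast
  then show ?thesis using assms(2,3) by auto
qed
lemma ib_minj: assumes "induced_bipartite S a b rel m p" "1 \<le> i" "i \<le> a" "1 \<le> j" "j \<le> a" "m i = m j" shows "i = j"
proof -
  have "inj_on m {1..a}" using assms(1) unfolding induced_bipartite_def by blast
  then show ?thesis by (rule inj_onD[where x=i and y=j]) (use assms(2-) in auto)
qed
lemma ib_pinj: assumes "induced_bipartite S a b rel m p" "1 \<le> i" "i \<le> b" "1 \<le> j" "j \<le> b" "p i = p j" shows "i = j"
proof -
  have "inj_on p {1..b}" using assms(1) unfolding induced_bipartite_def by blast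
  then show ?thesis by (rule inj_onD[where x=i and y=j]) (use assms(2-) in auto)
qed
lemma ib_mm: assumes "induced_bipartite S a b rel m p" "1 \<le> i" "i \<le> a" "1 \<le> j" "j \<le> a" shows "\<not> m i < m j"
proof -
  have "\<forall>i\<in>{1..a}. \<forall>j\<in>{1..a}. \<not> m i < m j" using assms(1) unfolding induced_bipartite_def by blast
  then show ?thesis using assms(2-) by auto
qed
lemma ib_pp: assumes "induced_bipartite S a b rel m p" "1 \<le> i" "i \<le> b" "1 \<le> j" "j \<le> b" shows "\<not> p i < p j"
proof -
  have "\<forall>i\<in>{1..b}. \<forall>j\<in>{1..b}. \<not> p i < p j" using assms(1) unfolding induced_bipartite_def by blast
  then show ?thesis using assms(2-) by auto
qed
lemma ib_mp: assumes "induced_bipartite S a b rel m p" "1 \<le> i" "i \<le> a" "1 \<le> j" "j \<le> b" shows "m i < p j \<longleftrightarrow> rel i j"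
proof -
  have "\<forall>i\<in>{1..a}. \<forall>j\<in>{1..b}. \<not> p j < m i \<and> (m i < p j \<longleftrightarrow> rel i j)" using assms(1) unfolding induced_bipartite_def by blast
  then show ?thesis using assms(2-) by auto
qed

theorem lemma11:
  fixes S :: "'a::order set" and n k :: nat
  assumes "finite S"
    and "hasse_is_path S n"
    and "k \<ge> 1"
    and "(\<exists>m p. is_W_k_k1 S k m p \<and> \<not> junction S (p 1) \<and> \<not> junction S (p (k+1)))
         \<or> (\<exists>m p. is_W_k1_k S k m p \<and> \<not> junction S (m 1) \<and> \<not> junction S (m (k+1)))"
  shows "Cset S \<noteq> {}"
proof -
  obtain q where bq: "bij_betw q {0..<n} S"
    and eq: "\<forall>i<n. \<forall>j<n. hasse_edge S (q i) (q j) \<longleftrightarrow> (i = j + 1 \<or> j = i + 1)"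
    using assms(2) unfolding hasse_is_path_def by blast
  interpret pp S n q using assms(1) bq eq by unfold_locales auto
  have K: "0 < 2 * k" using assms(3) by simp
  have k1: "2 * k - 1 = 2 * (k - 1) + 1" "Suc (2 * k - 1) = 2 * k" using assms(3) by auto
  from assms(4) show ?thesis
  proof
    assume "\<exists>m p. is_W_k_k1 S k m p \<and> \<not> junction S (p 1) \<and> \<not> junction S (p (k+1))"
    then obtain m p where W: "is_W_k_k1 S k m p" and nj1: "\<not> junction S (p 1)" and nj2: "\<not> junction S (p (k+1))"
      by blast
    have IB: "induced_bipartite S k (k+1) (\<lambda>i j. j = i \<or> j = i + 1) m p" using W unfolding is_W_k_k1_def .
    have mS: "\<And>i. 1 \<le> i \<Longrightarrow> i \<le> k \<Longrightarrow> m i \<in> S" and pS: "\<And>j. 1 \<le> j \<Longrightarrow> j \<le> k + 1 \<Longrightarrow> p j \<in> S"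
      using ib_m[OF IB] ib_p[OF IB] by auto
    have minj: "\<And>i j. 1 \<le> i \<Longrightarrow> i \<le> k \<Longrightarrow> 1 \<le> j \<Longrightarrow> j \<le> k \<Longrightarrow> m i = m j \<Longrightarrow> i = j"
      using ib_minj[OF IB] by blast
    have pinj: "\<And>i j. 1 \<le> i \<Longrightarrow> i \<le> k + 1 \<Longrightarrow> 1 \<le> j \<Longrightarrow> j \<le> k + 1 \<Longrightarrow> p i = p j \<Longrightarrow> i = j"
      using ib_pinj[OF IB] by blast
    have mm: "\<And>i j. 1 \<le> i \<Longrightarrow> i \<le> k \<Longrightarrow> 1 \<le> j \<Longrightarrow> j \<le> k \<Longrightarrow> \<not> m i < m j"
      using ib_mm[OF IB] by blast
    have ppn: "\<And>i j. 1 \<le> i \<Longrightarrow> i \<le> k + 1 \<Longrightarrow> 1 \<le> j \<Longrightarrow> j \<le> k + 1 \<Longrightarrow> \<not> p i < p j"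
      using ib_pp[OF IB] by blast
    have mp: "\<And>i j. 1 \<le> i \<Longrightarrow> i \<le> k \<Longrightarrow> 1 \<le> j \<Longrightarrow> j \<le> k + 1 \<Longrightarrow> m i < p j \<longleftrightarrow> (j = i \<or> j = i + 1)"
      using ib_mp[OF IB] by auto
    define e where "e t = (if even t then p (t div 2 + 1) else m (t div 2 + 1))" for t
    have e0: "e (2 * i) = p (i + 1)" and e1: "e (2 * i + 1) = m (i + 1)" for i unfolding e_def by auto
    have eS: "e t \<in> S" if "t \<le> 2 * k" for t
    proof -
      obtain i where "t = 2 * i \<or> t = 2 * i + 1" by (metis dvd_mult_div_cancel oddE even_iff_mod_2_eq_zero odd_iff_mod_2_eq_one)
      then show ?thesis using that e0 e1 mS pS by auto
    qed
    have cons: "e t < e (Suc t) \<or> e (Suc t) < e t" if "t < 2 * k" for t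
    proof -
      obtain i where "t = 2 * i \<or> t = 2 * i + 1" by (metis dvd_mult_div_cancel oddE even_iff_mod_2_eq_zero odd_iff_mod_2_eq_one)
      then show ?thesis
      proof
        assume t: "t = 2 * i"
        then have "e t = p (i + 1)" "e (Suc t) = m (i + 1)" using e0 e1 by auto
        then show ?thesis using mp[of "i + 1" "i + 1"] that t by auto
      next
        assume t: "t = 2 * i + 1"
        then have "e t = m (i + 1)" "e (Suc t) = p (i + 2)" using e0[of "i + 1"] e1 by (auto simp: algebra_simps)
        then show ?thesis using mp[of "i + 1" "i + 2"] that t by auto
      qed
    qed
    have tri: "\<not> e t < e (t + 2) \<and> \<not> e (t + 2) < e t \<and> e t \<noteq> e (t + 2)" if "t + 2 \<le> 2 * k" for t
    proof -
      obtain i where "t = 2 * i \<or> t = 2 * i + 1" by (metis dvd_mult_div_cancel oddE even_iff_mod_2_eq_zero odd_iff_mod_2_eq_one)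
      then show ?thesis
      proof
        assume t: "t = 2 * i"
        then have "e t = p (i + 1)" "e (t + 2) = p (i + 2)" using e0[of i] e0[of "i + 1"] by (auto simp: algebra_simps)
        then show ?thesis using ppn[of "i + 1" "i + 2"] ppn[of "i + 2" "i + 1"] pinj[of "i + 1" "i + 2"] that t by auto
      next
        assume t: "t = 2 * i + 1"
        then have "e t = m (i + 1)" "e (t + 2) = m (i + 2)" using e1[of i] e1[of "i + 1"] by (auto simp: algebra_simps)
        then show ?thesis using mm[of "i + 1" "i + 2"] mm[of "i + 2" "i + 1"] minj[of "i + 1" "i + 2"] that t by auto
      qed
    qed
    have E: "e 0 = p 1" "e 1 = m 1" "e (2 * k) = p (k + 1)" "e (2 * k - 1) = m k"
      using e0[of 0] e1[of 0] e0[of k] e1[of "k - 1"] k1 assms(3) by auto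
    have lo1: "m 1 < p 1" and lo2: "m k < p (k + 1)" using mp[of 1 1] mp[of k "k + 1"] assms(3) by auto
    have w: "\<And>t. t \<le> 2 * k \<Longrightarrow> ix (e t) < n \<and> q (ix (e t)) = e t" using qix eS by auto
    have "(\<forall>t<2 * k. ix (e t) < ix (e (Suc t))) \<or> (\<forall>t<2 * k. ix (e (Suc t)) < ix (e t))"
      by (rule zigzag[OF eS cons tri K])
    then show ?thesis
    proof
      assume inc: "\<forall>t<2 * k. ix (e t) < ix (e (Suc t))"
      have ab: "ix (e 0) < ix (e (2 * k))" using chain_all_inc[of "2 * k" "\<lambda>t. ix (e t)"] inc K by auto
      have A: "\<not> U (ix (e 0)) \<and> (0 < ix (e 0) \<longrightarrow> \<not> U (ix (e 0) - 1))"
        proof -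
          have wc: "ix (e 0) < n \<and> q (ix (e 0)) = e 0" by (rule w) (use K in simp)
          have wd: "ix (e 1) < n \<and> q (ix (e 1)) = e 1" by (rule w) (use K in simp)
          have r: "q (ix (e 1)) < q (ix (e 0))" using wc wd E lo1 by simp
          have nj: "\<not> junction S (q (ix (e 0)))" using wc E nj1 by simp
          show ?thesis using endpoint_lo[OF wc[THEN conjunct1] wd[THEN conjunct1] r nj] inc[rule_format, of 0] K by simp
        qed
      have d: "ix (e (2 * k - 1)) < ix (e (2 * k))" using inc[rule_format, of "2 * k - 1"] k1 K by auto
      have B: "U (ix (e (2 * k)) - 1) \<and> (ix (e (2 * k)) + 1 < n \<longrightarrow> U (ix (e (2 * k))))"
        proof -
          have wc: "ix (e (2 * k)) < n \<and> q (ix (e (2 * k))) = e (2 * k)" by (rule w) (use K in simp)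
          have wd: "ix (e (2 * k - 1)) < n \<and> q (ix (e (2 * k - 1))) = e (2 * k - 1)" by (rule w) (use K in simp)
          have r: "q (ix (e (2 * k - 1))) < q (ix (e (2 * k)))" using wc wd E lo2 by simp
          have nj: "\<not> junction S (q (ix (e (2 * k))))" using wc E nj2 by simp
          show ?thesis using endpoint_lo[OF wc[THEN conjunct1] wd[THEN conjunct1] r nj] d by simp
        qed
      have bn: "ix (e (2 * k)) < n" using w[of "2 * k"] K by simp
      show ?thesis
        apply (rule cset_ne[where v=U and a="ix (e 0)" and b="ix (e (2 * k))"])
        using A B ab bn by simp_all
    next
      assume dec: "\<forall>t<2 * k. ix (e (Suc t)) < ix (e t)"
      have ab: "ix (e (2 * k)) < ix (e 0)" using chain_all_dec[of "2 * k" "\<lambda>t. ix (e t)"] dec K by auto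
      have d: "ix (e (2 * k)) < ix (e (2 * k - 1))" using dec[rule_format, of "2 * k - 1"] k1 K by auto
      have A: "\<not> U (ix (e (2 * k))) \<and> (0 < ix (e (2 * k)) \<longrightarrow> \<not> U (ix (e (2 * k)) - 1))"
        proof -
          have wc: "ix (e (2 * k)) < n \<and> q (ix (e (2 * k))) = e (2 * k)" by (rule w) (use K in simp)
          have wd: "ix (e (2 * k - 1)) < n \<and> q (ix (e (2 * k - 1))) = e (2 * k - 1)" by (rule w) (use K in simp)
          have r: "q (ix (e (2 * k - 1))) < q (ix (e (2 * k)))" using wc wd E lo2 by simp
          have nj: "\<not> junction S (q (ix (e (2 * k))))" using wc E nj2 by simp
          show ?thesis using endpoint_lo[OF wc[THEN conjunct1] wd[THEN conjunct1] r nj] d by simp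
        qed
      have B: "U (ix (e 0) - 1) \<and> (ix (e 0) + 1 < n \<longrightarrow> U (ix (e 0)))"
        proof -
          have wc: "ix (e 0) < n \<and> q (ix (e 0)) = e 0" by (rule w) (use K in simp)
          have wd: "ix (e 1) < n \<and> q (ix (e 1)) = e 1" by (rule w) (use K in simp)
          have r: "q (ix (e 1)) < q (ix (e 0))" using wc wd E lo1 by simp
          have nj: "\<not> junction S (q (ix (e 0)))" using wc E nj1 by simp
          show ?thesis using endpoint_lo[OF wc[THEN conjunct1] wd[THEN conjunct1] r nj] dec[rule_format, of 0] K by simp
        qed
      have bn: "ix (e (0)) < n" using w[of "0"] K by simp
      show ?thesis
        apply (rule cset_ne[where v=U and a="ix (e (2 * k))" and b="ix (e 0)"])
        using A B ab bn by simp_all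
    qed
  next
    assume "\<exists>m p. is_W_k1_k S k m p \<and> \<not> junction S (m 1) \<and> \<not> junction S (m (k+1))"
    then obtain m p where W: "is_W_k1_k S k m p" and nj1: "\<not> junction S (m 1)" and nj2: "\<not> junction S (m (k+1))"
      by blast
    have IB: "induced_bipartite S (k+1) k (\<lambda>j i. j = i \<or> j = i + 1) m p" using W unfolding is_W_k1_k_def .
    have mS: "\<And>i. 1 \<le> i \<Longrightarrow> i \<le> k + 1 \<Longrightarrow> m i \<in> S" and pS: "\<And>j. 1 \<le> j \<Longrightarrow> j \<le> k \<Longrightarrow> p j \<in> S"
      using ib_m[OF IB] ib_p[OF IB] by auto
    have minj: "\<And>i j. 1 \<le> i \<Longrightarrow> i \<le> k + 1 \<Longrightarrow> 1 \<le> j \<Longrightarrow> j \<le> k + 1 \<Longrightarrow> m i = m j \<Longrightarrow> i = j"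
      using ib_minj[OF IB] by blast
    have pinj: "\<And>i j. 1 \<le> i \<Longrightarrow> i \<le> k \<Longrightarrow> 1 \<le> j \<Longrightarrow> j \<le> k \<Longrightarrow> p i = p j \<Longrightarrow> i = j"
      using ib_pinj[OF IB] by blast
    have mm: "\<And>i j. 1 \<le> i \<Longrightarrow> i \<le> k + 1 \<Longrightarrow> 1 \<le> j \<Longrightarrow> j \<le> k + 1 \<Longrightarrow> \<not> m i < m j"
      using ib_mm[OF IB] by blast
    have ppn: "\<And>i j. 1 \<le> i \<Longrightarrow> i \<le> k \<Longrightarrow> 1 \<le> j \<Longrightarrow> j \<le> k \<Longrightarrow> \<not> p i < p j"
      using ib_pp[OF IB] by blast
    have mp: "\<And>i j. 1 \<le> i \<Longrightarrow> i \<le> k + 1 \<Longrightarrow> 1 \<le> j \<Longrightarrow> j \<le> k \<Longrightarrow> m i < p j \<longleftrightarrow> (i = j \<or> i = j + 1)"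
      using ib_mp[OF IB] by auto
    define e where "e t = (if even t then m (t div 2 + 1) else p (t div 2 + 1))" for t
    have e0: "e (2 * i) = m (i + 1)" and e1: "e (2 * i + 1) = p (i + 1)" for i unfolding e_def by auto
    have eS: "e t \<in> S" if "t \<le> 2 * k" for t
    proof -
      obtain i where "t = 2 * i \<or> t = 2 * i + 1" by (metis dvd_mult_div_cancel oddE even_iff_mod_2_eq_zero odd_iff_mod_2_eq_one)
      then show ?thesis using that e0 e1 mS pS by auto
    qed
    have cons: "e t < e (Suc t) \<or> e (Suc t) < e t" if "t < 2 * k" for t
    proof -
      obtain i where "t = 2 * i \<or> t = 2 * i + 1" by (metis dvd_mult_div_cancel oddE even_iff_mod_2_eq_zero odd_iff_mod_2_eq_one)
      then show ?thesis
      proof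
        assume t: "t = 2 * i"
        then have "e t = m (i + 1)" "e (Suc t) = p (i + 1)" using e0 e1 by auto
        then show ?thesis using mp[of "i + 1" "i + 1"] that t by auto
      next
        assume t: "t = 2 * i + 1"
        then have "e t = p (i + 1)" "e (Suc t) = m (i + 2)" using e0[of "i + 1"] e1 by (auto simp: algebra_simps)
        then show ?thesis using mp[of "i + 2" "i + 1"] that t by auto
      qed
    qed
    have tri: "\<not> e t < e (t + 2) \<and> \<not> e (t + 2) < e t \<and> e t \<noteq> e (t + 2)" if "t + 2 \<le> 2 * k" for t
    proof -
      obtain i where "t = 2 * i \<or> t = 2 * i + 1" by (metis dvd_mult_div_cancel oddE even_iff_mod_2_eq_zero odd_iff_mod_2_eq_one)
      then show ?thesis
      proof
        assume t: "t = 2 * i"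
        then have "e t = m (i + 1)" "e (t + 2) = m (i + 2)" using e0[of i] e0[of "i + 1"] by (auto simp: algebra_simps)
        then show ?thesis using mm[of "i + 1" "i + 2"] mm[of "i + 2" "i + 1"] minj[of "i + 1" "i + 2"] that t by auto
      next
        assume t: "t = 2 * i + 1"
        then have "e t = p (i + 1)" "e (t + 2) = p (i + 2)" using e1[of i] e1[of "i + 1"] by (auto simp: algebra_simps)
        then show ?thesis using ppn[of "i + 1" "i + 2"] ppn[of "i + 2" "i + 1"] pinj[of "i + 1" "i + 2"] that t by auto
      qed
    qed
    have E: "e 0 = m 1" "e 1 = p 1" "e (2 * k) = m (k + 1)" "e (2 * k - 1) = p k"
      using e0[of 0] e1[of 0] e0[of k] e1[of "k - 1"] k1 assms(3) by auto
    have lo1: "m 1 < p 1" and lo2: "m (k + 1) < p k" using mp[of 1 1] mp[of "k + 1" k] assms(3) by auto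
    have w: "\<And>t. t \<le> 2 * k \<Longrightarrow> ix (e t) < n \<and> q (ix (e t)) = e t" using qix eS by auto
    have vv: "\<And>i j. cmpi (\<lambda>l. \<not> U l) i j = cmpi U i j" by (rule cmpi_neg)
    have "(\<forall>t<2 * k. ix (e t) < ix (e (Suc t))) \<or> (\<forall>t<2 * k. ix (e (Suc t)) < ix (e t))"
      by (rule zigzag[OF eS cons tri K])
    then show ?thesis
    proof
      assume inc: "\<forall>t<2 * k. ix (e t) < ix (e (Suc t))"
      have ab: "ix (e 0) < ix (e (2 * k))" using chain_all_inc[of "2 * k" "\<lambda>t. ix (e t)"] inc K by auto
      have A: "U (ix (e 0)) \<and> (0 < ix (e 0) \<longrightarrow> U (ix (e 0) - 1))"
        proof -
          have wc: "ix (e 0) < n \<and> q (ix (e 0)) = e 0" by (rule w) (use K in simp)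
          have wd: "ix (e 1) < n \<and> q (ix (e 1)) = e 1" by (rule w) (use K in simp)
          have r: "q (ix (e 0)) < q (ix (e 1))" using wc wd E lo1 by simp
          have nj: "\<not> junction S (q (ix (e 0)))" using wc E nj1 by simp
          show ?thesis using endpoint_hi[OF wc[THEN conjunct1] wd[THEN conjunct1] r nj] inc[rule_format, of 0] K by simp
        qed
      have d: "ix (e (2 * k - 1)) < ix (e (2 * k))" using inc[rule_format, of "2 * k - 1"] k1 K by auto
      have B: "\<not> U (ix (e (2 * k)) - 1) \<and> (ix (e (2 * k)) + 1 < n \<longrightarrow> \<not> U (ix (e (2 * k))))"
        proof -
          have wc: "ix (e (2 * k)) < n \<and> q (ix (e (2 * k))) = e (2 * k)" by (rule w) (use K in simp)
          have wd: "ix (e (2 * k - 1)) < n \<and> q (ix (e (2 * k - 1))) = e (2 * k - 1)" by (rule w) (use K in simp)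
          have r: "q (ix (e (2 * k))) < q (ix (e (2 * k - 1)))" using wc wd E lo2 by simp
          have nj: "\<not> junction S (q (ix (e (2 * k))))" using wc E nj2 by simp
          show ?thesis using endpoint_hi[OF wc[THEN conjunct1] wd[THEN conjunct1] r nj] d by simp
        qed
      have bn: "ix (e (2 * k)) < n" using w[of "2 * k"] K by simp
      show ?thesis
        apply (rule cset_ne[where v="\<lambda>l. \<not> U l" and a="ix (e 0)" and b="ix (e (2 * k))", OF vv])
        using A B ab bn by simp_all
    next
      assume dec: "\<forall>t<2 * k. ix (e (Suc t)) < ix (e t)"
      have ab: "ix (e (2 * k)) < ix (e 0)" using chain_all_dec[of "2 * k" "\<lambda>t. ix (e t)"] dec K by auto
      have d: "ix (e (2 * k)) < ix (e (2 * k - 1))" using dec[rule_format, of "2 * k - 1"] k1 K by auto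
      have A: "U (ix (e (2 * k))) \<and> (0 < ix (e (2 * k)) \<longrightarrow> U (ix (e (2 * k)) - 1))"
        proof -
          have wc: "ix (e (2 * k)) < n \<and> q (ix (e (2 * k))) = e (2 * k)" by (rule w) (use K in simp)
          have wd: "ix (e (2 * k - 1)) < n \<and> q (ix (e (2 * k - 1))) = e (2 * k - 1)" by (rule w) (use K in simp)
          have r: "q (ix (e (2 * k))) < q (ix (e (2 * k - 1)))" using wc wd E lo2 by simp
          have nj: "\<not> junction S (q (ix (e (2 * k))))" using wc E nj2 by simp
          show ?thesis using endpoint_hi[OF wc[THEN conjunct1] wd[THEN conjunct1] r nj] d by simp
        qed
      have B: "\<not> U (ix (e 0) - 1) \<and> (ix (e 0) + 1 < n \<longrightarrow> \<not> U (ix (e 0)))"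
        proof -
          have wc: "ix (e 0) < n \<and> q (ix (e 0)) = e 0" by (rule w) (use K in simp)
          have wd: "ix (e 1) < n \<and> q (ix (e 1)) = e 1" by (rule w) (use K in simp)
          have r: "q (ix (e 0)) < q (ix (e 1))" using wc wd E lo1 by simp
          have nj: "\<not> junction S (q (ix (e 0)))" using wc E nj1 by simp
          show ?thesis using endpoint_hi[OF wc[THEN conjunct1] wd[THEN conjunct1] r nj] dec[rule_format, of 0] K by simp
        qed
      have bn: "ix (e (0)) < n" using w[of "0"] K by simp
      show ?thesis
        apply (rule cset_ne[where v="\<lambda>l. \<not> U l" and a="ix (e (2 * k))" and b="ix (e 0)", OF vv])
        using A B ab bn by simp_all
    qed
  qed
qed



end
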